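(* Let $\mathbb{F}$ be a finite field or $\mathbb{R}$, $\Delta>1$ and $D\le n$. For an $m\times n$ matrix $M$ over $\mathbb{F}$ which can $\Delta$-approximate the sparsity $d=\|\mathbf{x}\|_0$ of any $\mathbf{x}\in\mathbb{F}^n$ with sparsity at most $D$ from $M\mathbf{x}$, it is necessary that $$\mathrm{rank}\,M\ \ge\ n-\max_{V\ (\Delta,D)\text{-distinguishing}}\dim(V).$$
   Context: $M\mathbf{x}$ is the ordinary matrix-vector product over $\mathbb{F}$; $\|\mathbf{x}\|_0$ is the number of nonzero entries. $M$ can $\Delta$-approximate $d$ if a deterministic decoder given only $M\mathbf{x}$ outputs $\hat d$ with $\frac1\Delta\le\hat d/d\le\Delta$ for all $\mathbf{x}$ with $\|\mathbf{x}\|_0\le D$. A subspace $V\subseteq\mathbb{F}^n$ is $(\Delta,D)$-distinguishing if any two vectors $\mathbf{x},\mathbf{y}$ in the same coset of $V$ with $\|\mathbf{x}\|_0\le\|\mathbf{y}\|_0\le D$ satisfy $\|\mathbf{y}\|_0\le\Delta^2\|\mathbf{x}\|_0$. *)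

theory Defs
  imports "HOL-Analysis.Analysis"
begin

definition spars :: "'a::zero ^ 'n \<Rightarrow> nat" where
  "spars x = card {i. x $ i \<noteq> 0}"

text \<open>M can Delta-approximate the sparsity of every vector of sparsity at most D:
  a deterministic decoder dec, seeing only M x, outputs dhat with
  d / Delta \<le> dhat \<le> Delta * d, where d = spars x (for d > 0 this is
  1/Delta \<le> dhat/d \<le> Delta; for d = 0 it forces dhat = 0).\<close>
definition can_approx :: "'a::field ^ 'n ^ 'm \<Rightarrow> real \<Rightarrow> nat \<Rightarrow> bool" where
  "can_approx M \<Delta> D \<longleftrightarrow>
     (\<exists>dec :: 'a ^ 'm \<Rightarrow> real. \<forall>x :: 'a ^ 'n. spars x \<le> D \<longrightarrow>
        real (spars x) / \<Delta> \<le> dec (M *v x) \<and> dec (M *v x) \<le> \<Delta> * real (spars x))"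

definition distinguishing :: "real \<Rightarrow> nat \<Rightarrow> ('a::field ^ 'n) set \<Rightarrow> bool" where
  "distinguishing \<Delta> D V \<longleftrightarrow> vec.subspace V \<and>
     (\<forall>x y. x - y \<in> V \<longrightarrow> spars x \<le> spars y \<longrightarrow> spars y \<le> D \<longrightarrow>
        real (spars y) \<le> \<Delta>\<^sup>2 * real (spars x))"

end

theory Submission
  imports Defs
begin


lemma rank_nullity_ge:
  fixes M :: "'a::field^'n^'m"
  shows "CARD('n) \<le> vec.dim (range ((*v) M)) + vec.dim {x. M *v x = 0}"
proof -
  let ?f = "(*v) M"
  obtain C where C: "C \<subseteq> range ?f" "vec.independent C" "range ?f \<subseteq> vec.span C"
      "card C = vec.dim (range ?f)"
    using vec.basis_exists by blast
  have fin: "finite C" using C vec.finiteI_independent by blast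
  define g where "g c = (SOME x. M *v x = c)" for c
  have g: "M *v g c = c" if "c \<in> C" for c
  proof -
    from that C(1) obtain x where "M *v x = c" by blast
    then show ?thesis unfolding g_def by (rule someI)
  qed
  have fgC: "?f ` g ` C = C" using g by (force simp: image_image)
  define S where "S = vec.span (g ` C)"
  define T where "T = {x. M *v x = 0}"
  have sS: "vec.subspace S" by (simp add: S_def vec.subspace_span)
  have sT: "vec.subspace T" unfolding T_def by (rule vec.subspace_kernel)
  have U: "UNIV \<subseteq> {x + y |x y. x \<in> S \<and> y \<in> T}"
  proof
    fix x :: "'a^'n"
    have "M *v x \<in> vec.span C" using C(3) by blast
    also have "vec.span C = ?f ` S" unfolding S_def
      by (metis fgC vec.span_image)
    finally obtain y where y: "y \<in> S" "M *v y = M *v x" by (metis imageE)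
    have "x - y \<in> T" unfolding T_def using y by (simp add: matrix_vector_mult_diff_distrib)
    moreover have "x = y + (x - y)" by simp
    ultimately show "x \<in> {x + y |x y. x \<in> S \<and> y \<in> T}" using y(1) by blast
  qed
  have "CARD('n) = vec.dim (UNIV :: ('a^'n) set)" by (rule vec_dim_card[symmetric])
  also have "\<dots> \<le> vec.dim {x + y |x y. x \<in> S \<and> y \<in> T}" using U by (rule vec.dim_subset)
  also have "\<dots> \<le> vec.dim S + vec.dim T" using vec.dim_sums_Int[OF sS sT] by linarith
  also have "vec.dim S \<le> card C"
  proof -
    have "vec.dim S = vec.dim (g ` C)" by (simp add: S_def vec.dim_span)
    also have "\<dots> \<le> card (g ` C)" by (rule vec.dim_le_card) (auto simp: fin vec.span_superset)
    also have "\<dots> \<le> card C" by (rule card_image_le[OF fin])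
    finally show ?thesis .
  qed
  finally show ?thesis using C(4) T_def by simp
qed

lemma range_le_rank:
  fixes M :: "'a::field^'n^'m"
  shows "vec.dim (range ((*v) M)) \<le> rank M"
proof -
  obtain B where B: "B \<subseteq> rows M" "vec.independent B" "rows M \<subseteq> vec.span B"
      "card B = vec.dim (rows M)"
    using vec.basis_exists by blast
  have fin: "finite B" using B vec.finiteI_independent by blast
  have "\<forall>i. \<exists>u. row i M = (\<Sum>v\<in>B. u v *s v)"
  proof
    fix i
    have "row i M \<in> vec.span B" using B(3) by (auto simp: rows_def)
    then show "\<exists>u. row i M = (\<Sum>v\<in>B. u v *s v)" using vec.span_finite[OF fin] by auto
  qed
  then obtain c where c: "\<And>i. row i M = (\<Sum>v\<in>B. c i v *s v)" by metis
  define w where "w b = (\<chi> i. c i b)" for b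
  have eq: "M *v x = (\<Sum>b\<in>B. (\<Sum>j\<in>UNIV. b $ j * x $ j) *s w b)" for x
  proof (rule vec_eq_iff[THEN iffD2], rule allI)
    fix i
    have Mij: "M $ i $ j = (\<Sum>b\<in>B. c i b * b $ j)" for j
    proof -
      have "M $ i $ j = row i M $ j" by (simp add: row_def)
      also have "\<dots> = (\<Sum>b\<in>B. c i b * b $ j)" by (simp add: c sum_component)
      finally show ?thesis .
    qed
    have "(M *v x) $ i = (\<Sum>j\<in>UNIV. (\<Sum>b\<in>B. c i b * b $ j) * x $ j)"
      by (simp add: matrix_vector_mult_def Mij)
    also have "\<dots> = (\<Sum>b\<in>B. (\<Sum>j\<in>UNIV. b $ j * x $ j) * c i b)"
    proof -
      have "(\<Sum>j\<in>UNIV. (\<Sum>b\<in>B. c i b * b $ j) * x $ j) = (\<Sum>j\<in>UNIV. \<Sum>b\<in>B. b $ j * x $ j * c i b)"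
        by (rule sum.cong[OF refl], subst sum_distrib_right, rule sum.cong[OF refl], simp add: mult_ac)
      also have "\<dots> = (\<Sum>b\<in>B. \<Sum>j\<in>UNIV. b $ j * x $ j * c i b)" by (rule sum.swap)
      also have "\<dots> = (\<Sum>b\<in>B. (\<Sum>j\<in>UNIV. b $ j * x $ j) * c i b)"
        by (simp add: sum_distrib_right)
      finally show ?thesis .
    qed
    also have "\<dots> = (\<Sum>b\<in>B. (\<Sum>j\<in>UNIV. b $ j * x $ j) *s w b) $ i"
      by (simp add: sum_component w_def)
    finally show "(M *v x) $ i = (\<Sum>b\<in>B. (\<Sum>j\<in>UNIV. b $ j * x $ j) *s w b) $ i" .
  qed
  have "range ((*v) M) \<subseteq> vec.span (w ` B)"
  proof
    fix y assume "y \<in> range ((*v) M)"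
    then obtain x where "y = M *v x" by blast
    moreover have "M *v x \<in> vec.span (w ` B)" unfolding eq
      by (rule vec.span_sum, rule vec.span_scale, rule vec.span_base) simp
    ultimately show "y \<in> vec.span (w ` B)" by simp
  qed
  then have "vec.dim (range ((*v) M)) \<le> card (w ` B)" by (rule vec.dim_le_card) (simp add: fin)
  also have "\<dots> \<le> card B" by (rule card_image_le[OF fin])
  finally show ?thesis using B(4) by (simp add: row_rank_def_gen)
qed

lemma main:
  fixes M :: "'a::field ^ 'n ^ 'm" and \<Delta> :: real
  assumes "\<Delta> > 1" and "can_approx M \<Delta> D"
  shows "int (rank M) \<ge> int CARD('n) -
             int (Max {vec.dim V | V :: ('a ^ 'n) set. distinguishing \<Delta> D V})"
proof -
  let ?K = "{x. M *v x = 0}"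
  obtain dec :: "'a^'m \<Rightarrow> real" where dec: "\<And>x. spars x \<le> D \<Longrightarrow>
        real (spars x) / \<Delta> \<le> dec (M *v x) \<and> dec (M *v x) \<le> \<Delta> * real (spars x)"
    using assms(2) unfolding can_approx_def by blast
  have dK: "distinguishing \<Delta> D ?K"
    unfolding distinguishing_def
  proof (intro conjI allI impI)
    show "vec.subspace ?K" by (rule vec.subspace_kernel)
    fix x y :: "'a^'n"
    assume xy: "x - y \<in> ?K" "spars x \<le> spars y" "spars y \<le> D"
    have same: "M *v x = M *v y" using xy(1) by (simp add: matrix_vector_mult_diff_distrib)
    have a: "real (spars y) / \<Delta> \<le> dec (M *v y)" using dec[OF xy(3)] by blast
    have b: "dec (M *v x) \<le> \<Delta> * real (spars x)" using dec[of x] xy by linarith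
    have "real (spars y) / \<Delta> \<le> \<Delta> * real (spars x)" using a b same by simp
    then have "real (spars y) \<le> \<Delta> * (\<Delta> * real (spars x))" using assms(1)
      by (simp add: divide_le_eq mult_ac)
    then show "real (spars y) \<le> \<Delta>\<^sup>2 * real (spars x)" by (simp add: power2_eq_square mult_ac)
  qed
  let ?A = "{vec.dim V | V :: ('a ^ 'n) set. distinguishing \<Delta> D V}"
  have "?A \<subseteq> {..CARD('n)}"
  proof -
    have bnd: "vec.dim V \<le> CARD('n)" for V :: "('a^'n) set"
      by (metis vec.dim_subset subset_UNIV vec_dim_card)
    show ?thesis using bnd by auto
  qed
  then have fA: "finite ?A" by (rule finite_subset) simp
  have "vec.dim ?K \<in> ?A" using dK by blast
  then have le: "vec.dim ?K \<le> Max ?A" using fA by simp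
  show ?thesis using rank_nullity_ge[of M] range_le_rank[of M] le by linarith
qed


theorem theorem7:
  fixes \<Delta> :: real
    and M :: "'a::field ^ 'n ^ 'm" and D :: nat
    and M' :: "real ^ 'k ^ 'l" and D' :: nat
  assumes "finite (UNIV :: 'a set)"
    and "\<Delta> > 1"
  shows "(D \<le> CARD('n) \<and> can_approx M \<Delta> D \<longrightarrow>
           int (rank M) \<ge> int CARD('n) -
             int (Max {vec.dim V | V :: ('a ^ 'n) set. distinguishing \<Delta> D V}))
       \<and> (D' \<le> CARD('k) \<and> can_approx M' \<Delta> D' \<longrightarrow>
           int (rank M') \<ge> int CARD('k) -
             int (Max {vec.dim V | V :: (real ^ 'k) set. distinguishing \<Delta> D' V}))"
  using main[OF assms(2), of M D] main[OF assms(2), of M' D'] by blast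

end
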